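(* For all $k,\ell\in\mathbb N_0$, in $\mathrm{sVW}$ one has $b\circ(y^k\otimes y^\ell)\circ b^*=0$ in $\mathrm{Hom}(0,0)$; equivalently $b_iy_i^ky_{i+1}^\ell b_i^*=0$ for all $i\ge1$.
   Context: Work over $\mathbb C$. A supercategory is a category enriched in $\mathbb Z/2$-graded vector spaces with parity-preserving composition; in a monoidal supercategory the super interchange law $(f\otimes g)\circ(h\otimes k)=(-1)^{\bar g\bar h}(f\circ h)\otimes(g\circ k)$ holds for homogeneous morphisms. The affine VW supercategory $\mathrm{sVW}$ is the $\mathbb C$-linear strict monoidal supercategory generated by one object $\star$ and morphisms $s:\star\otimes\star\to\star\otimes\star$ (even), $b:\star\otimes\star\to\mathbb 1$ (odd), $b^*:\mathbb 1\to\star\otimes\star$ (odd), $y:\star\to\star$ (even), subject to: (R1) $s\circ s=1_{\star\otimes\star}$ and $(s\otimes 1)(1\otimes s)(s\otimes 1)=(1\otimes s)(s\otimes1)(1\otimes s)$; (R2) $(b\otimes 1_\star)\circ(1_\star\otimes b^* )=-1_\star$ and $(1_\star\otimes b)\circ(b^*\otimes 1_\star)=1_\star$; (R3) $(1_\star\otimes s)\circ(b^*\otimes 1_\star)=(s\otimes 1_\star)\circ(1_\star\otimes b^* )$ and $s\circ b^*=-b^*$; (R4) $1_\star\otimes y=s\circ(y\otimes 1_\star)\circ s+s+b^*\circ b$ and $b\circ(1_\star\otimes y)=b\circ(y\otimes 1_\star)+b$. Objects are identified with $a\in\mathbb N_0$; $b_i=1_{i-1}\otimes b\otimes 1_{a-i+1}$,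 $b_i^*=1_{i-1}\otimes b^*\otimes 1_{a-i+1}$, $y_i=1_{i-1}\otimes y\otimes 1_{a-i}$. *)

theory Defs
  imports Complex_Main
begin

text \<open>Syntactic presentation of the affine VW supercategory sVW.  Every well-typed
  expression is homogeneous; typed t a b p means t : a -> b of parity p
  (True = odd).  Comp f g is f composed after g.\<close>

datatype tm =
    Id nat | S | B | Bs | Y
  | Zero nat nat bool
  | Comp tm tm
  | Tens tm tm
  | Add tm tm
  | Smul complex tm

inductive typed :: "tm \<Rightarrow> nat \<Rightarrow> nat \<Rightarrow> bool \<Rightarrow> bool" where
  t_id: "typed (Id n) n n False"
| t_s: "typed S 2 2 False"
| t_b: "typed B 2 0 True"
| t_bs: "typed Bs 0 2 True"
| t_y: "typed Y 1 1 False"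
| t_zero: "typed (Zero a b p) a b p"
| t_comp: "typed g a b p \<Longrightarrow> typed f b c q \<Longrightarrow> typed (Comp f g) a c (p \<noteq> q)"
| t_tens: "typed f a b p \<Longrightarrow> typed g c d q \<Longrightarrow> typed (Tens f g) (a + c) (b + d) (p \<noteq> q)"
| t_add: "typed f a b p \<Longrightarrow> typed g a b p \<Longrightarrow> typed (Add f g) a b p"
| t_smul: "typed f a b p \<Longrightarrow> typed (Smul c f) a b p"

text \<open>Two expressions denote the same morphism of sVW iff they are related.\<close>

inductive sVW_eq :: "tm \<Rightarrow> tm \<Rightarrow> bool" where
  refl: "typed f a b p \<Longrightarrow> sVW_eq f f"
| sym: "sVW_eq f g \<Longrightarrow> sVW_eq g f"
| trans: "sVW_eq f g \<Longrightarrow> sVW_eq g h \<Longrightarrow> sVW_eq f h"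
| comp_cong: "sVW_eq f f' \<Longrightarrow> sVW_eq g g' \<Longrightarrow> typed g a b p \<Longrightarrow> typed f b c q
      \<Longrightarrow> sVW_eq (Comp f g) (Comp f' g')"
| tens_cong: "sVW_eq f f' \<Longrightarrow> sVW_eq g g' \<Longrightarrow> sVW_eq (Tens f g) (Tens f' g')"
| add_cong: "sVW_eq f f' \<Longrightarrow> sVW_eq g g' \<Longrightarrow> typed f a b p \<Longrightarrow> typed g a b p
      \<Longrightarrow> sVW_eq (Add f g) (Add f' g')"
| smul_cong: "sVW_eq f f' \<Longrightarrow> sVW_eq (Smul c f) (Smul c f')"
| add_assoc: "typed f a b p \<Longrightarrow> typed g a b p \<Longrightarrow> typed h a b p
      \<Longrightarrow> sVW_eq (Add (Add f g) h) (Add f (Add g h))"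
| add_comm: "typed f a b p \<Longrightarrow> typed g a b p \<Longrightarrow> sVW_eq (Add f g) (Add g f)"
| add_zero: "typed f a b p \<Longrightarrow> sVW_eq (Add f (Zero a b p)) f"
| add_inv: "typed f a b p \<Longrightarrow> sVW_eq (Add f (Smul (-1) f)) (Zero a b p)"
| smul_one: "typed f a b p \<Longrightarrow> sVW_eq (Smul 1 f) f"
| smul_smul: "typed f a b p \<Longrightarrow> sVW_eq (Smul c (Smul d f)) (Smul (c * d) f)"
| smul_add_left: "typed f a b p \<Longrightarrow> sVW_eq (Smul (c + d) f) (Add (Smul c f) (Smul d f))"
| smul_add_right: "typed f a b p \<Longrightarrow> typed g a b p
      \<Longrightarrow> sVW_eq (Smul c (Add f g)) (Add (Smul c f) (Smul c g))"
| comp_add_left: "typed g a b p \<Longrightarrow> typed f b c q \<Longrightarrow> typed f' b c q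
      \<Longrightarrow> sVW_eq (Comp (Add f f') g) (Add (Comp f g) (Comp f' g))"
| comp_add_right: "typed g a b p \<Longrightarrow> typed g' a b p \<Longrightarrow> typed f b c q
      \<Longrightarrow> sVW_eq (Comp f (Add g g')) (Add (Comp f g) (Comp f g'))"
| comp_smul_left: "typed g a b p \<Longrightarrow> typed f b c q
      \<Longrightarrow> sVW_eq (Comp (Smul x f) g) (Smul x (Comp f g))"
| comp_smul_right: "typed g a b p \<Longrightarrow> typed f b c q
      \<Longrightarrow> sVW_eq (Comp f (Smul x g)) (Smul x (Comp f g))"
| tens_add_left: "typed f a b p \<Longrightarrow> typed f' a b p \<Longrightarrow> typed g c d q
      \<Longrightarrow> sVW_eq (Tens (Add f f') g) (Add (Tens f g) (Tens f' g))"
| tens_add_right: "typed f a b p \<Longrightarrow> typed g c d q \<Longrightarrow> typed g' c d q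
      \<Longrightarrow> sVW_eq (Tens f (Add g g')) (Add (Tens f g) (Tens f g'))"
| tens_smul_left: "typed f a b p \<Longrightarrow> typed g c d q
      \<Longrightarrow> sVW_eq (Tens (Smul x f) g) (Smul x (Tens f g))"
| tens_smul_right: "typed f a b p \<Longrightarrow> typed g c d q
      \<Longrightarrow> sVW_eq (Tens f (Smul x g)) (Smul x (Tens f g))"
| comp_id_left: "typed f a b p \<Longrightarrow> sVW_eq (Comp (Id b) f) f"
| comp_id_right: "typed f a b p \<Longrightarrow> sVW_eq (Comp f (Id a)) f"
| comp_assoc: "typed h a b p \<Longrightarrow> typed g b c q \<Longrightarrow> typed f c d r
      \<Longrightarrow> sVW_eq (Comp (Comp f g) h) (Comp f (Comp g h))"
| tens_id: "sVW_eq (Tens (Id m) (Id n)) (Id (m + n))"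
| tens_assoc: "typed f a b p \<Longrightarrow> typed g c d q \<Longrightarrow> typed h e e' r
      \<Longrightarrow> sVW_eq (Tens (Tens f g) h) (Tens f (Tens g h))"
| tens_unit_left: "typed f a b p \<Longrightarrow> sVW_eq (Tens (Id 0) f) f"
| tens_unit_right: "typed f a b p \<Longrightarrow> sVW_eq (Tens f (Id 0)) f"
| interchange: "typed h a b p3 \<Longrightarrow> typed f b c p1 \<Longrightarrow> typed k x e p4 \<Longrightarrow> typed g e d p2
      \<Longrightarrow> sVW_eq (Comp (Tens f g) (Tens h k))
                 (Smul (if p2 \<and> p3 then -1 else 1) (Tens (Comp f h) (Comp g k)))"
| R1a: "sVW_eq (Comp S S) (Id 2)"
| R1b: "sVW_eq (Comp (Tens S (Id 1)) (Comp (Tens (Id 1) S) (Tens S (Id 1))))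
               (Comp (Tens (Id 1) S) (Comp (Tens S (Id 1)) (Tens (Id 1) S)))"
| R2a: "sVW_eq (Comp (Tens B (Id 1)) (Tens (Id 1) Bs)) (Smul (-1) (Id 1))"
| R2b: "sVW_eq (Comp (Tens (Id 1) B) (Tens Bs (Id 1))) (Id 1)"
| R3a: "sVW_eq (Comp (Tens (Id 1) S) (Tens Bs (Id 1))) (Comp (Tens S (Id 1)) (Tens (Id 1) Bs))"
| R3b: "sVW_eq (Comp S Bs) (Smul (-1) Bs)"
| R4a: "sVW_eq (Tens (Id 1) Y) (Add (Add (Comp S (Comp (Tens Y (Id 1)) S)) S) (Comp Bs B))"
| R4b: "sVW_eq (Comp B (Tens (Id 1) Y)) (Add (Comp B (Tens Y (Id 1))) B)"

fun ypow :: "nat \<Rightarrow> tm" where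
  "ypow 0 = Id 1"
| "ypow (Suc k) = Comp Y (ypow k)"

end

theory Submission
  imports Defs
begin


fun tyof :: "tm \<Rightarrow> (nat \<times> nat \<times> bool) option" where
  "tyof (Id n) = Some (n,n,False)"
| "tyof S = Some (2,2,False)"
| "tyof B = Some (2,0,True)"
| "tyof Bs = Some (0,2,True)"
| "tyof Y = Some (1,1,False)"
| "tyof (Zero a b p) = Some (a,b,p)"
| "tyof (Comp f g) = (case (tyof f, tyof g) of (Some (b',c,q), Some (a,b,p)) \<Rightarrow>
      if b = b' then Some (a,c,p \<noteq> q) else None | _ \<Rightarrow> None)"
| "tyof (Tens f g) = (case (tyof f, tyof g) of (Some (a,b,p), Some (c,d,q)) \<Rightarrow>
      Some (a+c,b+d,p\<noteq>q) | _ \<Rightarrow> None)"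
| "tyof (Add f g) = (case (tyof f, tyof g) of (Some t, Some t') \<Rightarrow>
      if t = t' then Some t else None | _ \<Rightarrow> None)"
| "tyof (Smul c f) = tyof f"

lemma typed_tyof: "typed f a b p \<Longrightarrow> tyof f = Some (a,b,p)"
  by (induction rule: typed.induct) auto

lemma t_comp': "typed g a b p \<Longrightarrow> typed f b c q \<Longrightarrow> r = (p \<noteq> q) \<Longrightarrow> typed (Comp f g) a c r"
  using typed.t_comp by blast
lemma t_tens': "typed f a b p \<Longrightarrow> typed g c d q \<Longrightarrow> r = (p \<noteq> q) \<Longrightarrow> a' = a + c \<Longrightarrow> b' = b + d \<Longrightarrow> typed (Tens f g) a' b' r"
  using typed.t_tens by blast

lemma tyof_typed: "tyof f = Some (a,b,p) \<Longrightarrow> typed f a b p"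
proof (induction f arbitrary: a b p)
  case (Comp f g)
  obtain t1 t2 where f: "tyof f = Some t1" and g: "tyof g = Some t2"
    using Comp.prems by (cases "tyof f"; cases "tyof g") auto
  obtain x1 y1 q1 where t1: "t1 = (x1,y1,q1)" by (cases t1) auto
  obtain x2 y2 q2 where t2: "t2 = (x2,y2,q2)" by (cases t2) auto
  have "typed f x1 y1 q1" "typed g x2 y2 q2" using Comp.IH f g t1 t2 by auto
  moreover have "y2 = x1" "a = x2" "b = y1" "p = (q2 \<noteq> q1)" using Comp.prems f g t1 t2
    by (auto split: if_splits)
  ultimately show ?case by (auto intro!: t_comp')
next
  case (Tens f g)
  obtain t1 t2 where f: "tyof f = Some t1" and g: "tyof g = Some t2"
    using Tens.prems by (cases "tyof f"; cases "tyof g") auto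
  obtain x1 y1 q1 where t1: "t1 = (x1,y1,q1)" by (cases t1) auto
  obtain x2 y2 q2 where t2: "t2 = (x2,y2,q2)" by (cases t2) auto
  have "typed f x1 y1 q1" "typed g x2 y2 q2" using Tens.IH f g t1 t2 by auto
  moreover have "a = x1 + x2" "b = y1 + y2" "p = (q1 \<noteq> q2)" using Tens.prems f g t1 t2 by auto
  ultimately show ?case by (auto intro!: t_tens')
next
  case (Add f g)
  then obtain t1 t2 where f: "tyof f = Some t1" and g: "tyof g = Some t2"
    by (auto split: option.splits)
  with Add.prems Add.IH show ?case by (auto split: if_splits intro: typed.intros)
qed (simp_all add: typed.intros t_y[unfolded One_nat_def])

lemma typed_iff: "typed f a b p \<longleftrightarrow> tyof f = Some (a,b,p)"
  using typed_tyof tyof_typed by blast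




notation sVW_eq (infix "\<approx>" 50)
lemmas [trans] = sVW_eq.trans

definition par :: "tm \<Rightarrow> bool" where
  "par t = (case tyof t of Some (a,b,p) \<Rightarrow> p | None \<Rightarrow> False)"

lemma ex_typed: "tyof t \<noteq> None \<Longrightarrow> \<exists>a b p. typed t a b p"
  by (cases "tyof t") (auto simp: typed_iff)

lemma rfl: "tyof f \<noteq> None \<Longrightarrow> f \<approx> f"
  using ex_typed sVW_eq.refl by blast

lemma symm: "f \<approx> g \<Longrightarrow> g \<approx> f" by (rule sVW_eq.sym)

lemma cC: "f \<approx> f' \<Longrightarrow> g \<approx> g' \<Longrightarrow> tyof (Comp f g) \<noteq> None \<Longrightarrow> Comp f g \<approx> Comp f' g'"
  by (cases "tyof f"; cases "tyof g"; auto simp: typed_iff split: if_splits intro: sVW_eq.comp_cong)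

lemma cCl: "f \<approx> f' \<Longrightarrow> tyof (Comp f g) \<noteq> None \<Longrightarrow> Comp f g \<approx> Comp f' g"
  by (cases "tyof f"; cases "tyof g"; auto simp: typed_iff split: if_splits intro!: cC rfl)

lemma cCr: "g \<approx> g' \<Longrightarrow> tyof (Comp f g) \<noteq> None \<Longrightarrow> Comp f g \<approx> Comp f g'"
  by (cases "tyof f"; cases "tyof g"; auto simp: typed_iff split: if_splits intro!: cC rfl)

lemma cTl: "f \<approx> f' \<Longrightarrow> tyof g \<noteq> None \<Longrightarrow> Tens f g \<approx> Tens f' g"
  by (auto intro!: sVW_eq.tens_cong rfl)

lemma cTr: "g \<approx> g' \<Longrightarrow> tyof f \<noteq> None \<Longrightarrow> Tens f g \<approx> Tens f g'"
  by (auto intro!: sVW_eq.tens_cong rfl)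

lemma cA: "f \<approx> f' \<Longrightarrow> g \<approx> g' \<Longrightarrow> tyof (Add f g) \<noteq> None \<Longrightarrow> Add f g \<approx> Add f' g'"
  by (cases "tyof f"; cases "tyof g"; auto simp: typed_iff split: if_splits intro: sVW_eq.add_cong)

lemma cAl: "f \<approx> f' \<Longrightarrow> tyof (Add f g) \<noteq> None \<Longrightarrow> Add f g \<approx> Add f' g"
  by (cases "tyof f"; cases "tyof g"; auto simp: typed_iff split: if_splits intro!: cA rfl)

lemma cAr: "g \<approx> g' \<Longrightarrow> tyof (Add f g) \<noteq> None \<Longrightarrow> Add f g \<approx> Add f g'"
  by (cases "tyof f"; cases "tyof g"; auto simp: typed_iff split: if_splits intro!: cA rfl)

lemma cS: "f \<approx> f' \<Longrightarrow> Smul c f \<approx> Smul c f'"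
  by (rule sVW_eq.smul_cong)

lemma assoc: "tyof (Comp (Comp f g) h) \<noteq> None \<Longrightarrow> Comp (Comp f g) h \<approx> Comp f (Comp g h)"
  by (cases "tyof f"; cases "tyof g"; cases "tyof h"; auto simp: typed_iff split: if_splits intro: sVW_eq.comp_assoc)

lemma idl: "tyof (Comp (Id n) f) \<noteq> None \<Longrightarrow> Comp (Id n) f \<approx> f"
  by (cases "tyof f"; auto simp: typed_iff split: if_splits intro: sVW_eq.comp_id_left)

lemma idr: "tyof (Comp f (Id n)) \<noteq> None \<Longrightarrow> Comp f (Id n) \<approx> f"
  by (cases "tyof f"; auto simp: typed_iff split: if_splits intro: sVW_eq.comp_id_right)

lemma tassoc: "tyof (Tens (Tens f g) h) \<noteq> None \<Longrightarrow> Tens (Tens f g) h \<approx> Tens f (Tens g h)"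
  by (cases "tyof f"; cases "tyof g"; cases "tyof h"; auto simp: typed_iff split: if_splits intro: sVW_eq.tens_assoc)

lemma tul: "tyof f \<noteq> None \<Longrightarrow> Tens (Id 0) f \<approx> f"
  by (cases "tyof f"; auto simp: typed_iff intro: sVW_eq.tens_unit_left)

lemma tur: "tyof f \<noteq> None \<Longrightarrow> Tens f (Id 0) \<approx> f"
  by (cases "tyof f"; auto simp: typed_iff intro: sVW_eq.tens_unit_right)

lemma compT: "tyof (Comp f h) \<noteq> None \<Longrightarrow> \<exists>a b c p q. typed h a b p \<and> typed f b c q"
  by (cases "tyof f"; cases "tyof h"; auto simp: typed_iff split: if_splits)

lemma ich: "tyof (Comp f h) \<noteq> None \<Longrightarrow> tyof (Comp g k) \<noteq> None \<Longrightarrow>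
   Comp (Tens f g) (Tens h k) \<approx> Smul (if par g \<and> par h then -1 else 1) (Tens (Comp f h) (Comp g k))"
proof -
  assume 1: "tyof (Comp f h) \<noteq> None" and 2: "tyof (Comp g k) \<noteq> None"
  obtain a b c p3 p1 where h: "typed h a b p3" and f: "typed f b c p1" using compT[OF 1] by blast
  obtain x e d p4 p2 where k: "typed k x e p4" and g: "typed g e d p2" using compT[OF 2] by blast
  have "par g = p2" "par h = p3" using g h by (auto simp: par_def typed_iff)
  then show ?thesis using sVW_eq.interchange[OF h f k g] by simp
qed

lemma smul1: "tyof f \<noteq> None \<Longrightarrow> Smul 1 f \<approx> f"
  by (cases "tyof f"; auto simp: typed_iff intro: sVW_eq.smul_one)

lemma ichp: "tyof (Comp f h) \<noteq> None \<Longrightarrow> tyof (Comp g k) \<noteq> None \<Longrightarrow> \<not> (par g \<and> par h) \<Longrightarrow>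
   Comp (Tens f g) (Tens h k) \<approx> Tens (Comp f h) (Comp g k)"
  using ich[of f h g k] smul1[of "Tens (Comp f h) (Comp g k)"]
  by (auto elim: sVW_eq.trans)

lemma ichm: "tyof (Comp f h) \<noteq> None \<Longrightarrow> tyof (Comp g k) \<noteq> None \<Longrightarrow> par g \<Longrightarrow> par h \<Longrightarrow>
   Comp (Tens f g) (Tens h k) \<approx> Smul (-1) (Tens (Comp f h) (Comp g k))"
  using ich[of f h g k] by auto

lemma smulsmul: "tyof f \<noteq> None \<Longrightarrow> Smul c (Smul d f) \<approx> Smul (c*d) f"
  by (cases "tyof f"; auto simp: typed_iff intro: sVW_eq.smul_smul)

lemma smul_addl: "tyof f \<noteq> None \<Longrightarrow> Smul (c+d) f \<approx> Add (Smul c f) (Smul d f)"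
  by (cases "tyof f"; auto simp: typed_iff intro: sVW_eq.smul_add_left)

lemma smul_addr: "tyof (Add f g) \<noteq> None \<Longrightarrow> Smul c (Add f g) \<approx> Add (Smul c f) (Smul c g)"
  by (cases "tyof f"; cases "tyof g"; auto simp: typed_iff split: if_splits intro: sVW_eq.smul_add_right)

lemma addassoc: "tyof (Add (Add f g) h) \<noteq> None \<Longrightarrow> Add (Add f g) h \<approx> Add f (Add g h)"
  by (cases "tyof f"; cases "tyof g"; cases "tyof h"; auto simp: typed_iff split: if_splits intro: sVW_eq.add_assoc)

lemma addcomm: "tyof (Add f g) \<noteq> None \<Longrightarrow> Add f g \<approx> Add g f"
  by (cases "tyof f"; cases "tyof g"; auto simp: typed_iff split: if_splits intro: sVW_eq.add_comm)

lemma addzero: "tyof f = Some (a,b,p) \<Longrightarrow> Add f (Zero a b p) \<approx> f"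
  by (auto simp: typed_iff intro: sVW_eq.add_zero)

lemma addinv: "tyof f = Some (a,b,p) \<Longrightarrow> Add f (Smul (-1) f) \<approx> Zero a b p"
  by (auto simp: typed_iff intro: sVW_eq.add_inv)

lemma caddl: "tyof (Comp (Add f f') g) \<noteq> None \<Longrightarrow> Comp (Add f f') g \<approx> Add (Comp f g) (Comp f' g)"
  by (cases "tyof f"; cases "tyof f'"; cases "tyof g"; auto simp: typed_iff split: if_splits intro: sVW_eq.comp_add_left)

lemma caddr: "tyof (Comp f (Add g g')) \<noteq> None \<Longrightarrow> Comp f (Add g g') \<approx> Add (Comp f g) (Comp f g')"
  by (cases "tyof f"; cases "tyof g'"; cases "tyof g"; auto simp: typed_iff split: if_splits intro: sVW_eq.comp_add_right)

lemma csmull: "tyof (Comp f g) \<noteq> None \<Longrightarrow> Comp (Smul x f) g \<approx> Smul x (Comp f g)"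
  by (cases "tyof f"; cases "tyof g"; auto simp: typed_iff split: if_splits intro: sVW_eq.comp_smul_left)

lemma csmulr: "tyof (Comp f g) \<noteq> None \<Longrightarrow> Comp f (Smul x g) \<approx> Smul x (Comp f g)"
  by (cases "tyof f"; cases "tyof g"; auto simp: typed_iff split: if_splits intro: sVW_eq.comp_smul_right)

lemma taddl: "tyof (Add f f') \<noteq> None \<Longrightarrow> tyof g \<noteq> None \<Longrightarrow> Tens (Add f f') g \<approx> Add (Tens f g) (Tens f' g)"
  by (cases "tyof f"; cases "tyof f'"; cases "tyof g"; auto simp: typed_iff split: if_splits intro: sVW_eq.tens_add_left)

lemma taddr: "tyof (Add g g') \<noteq> None \<Longrightarrow> tyof f \<noteq> None \<Longrightarrow> Tens f (Add g g') \<approx> Add (Tens f g) (Tens f g')"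
  by (cases "tyof f"; cases "tyof g'"; cases "tyof g"; auto simp: typed_iff split: if_splits intro: sVW_eq.tens_add_right)

lemma tsmull: "tyof f \<noteq> None \<Longrightarrow> tyof g \<noteq> None \<Longrightarrow> Tens (Smul x f) g \<approx> Smul x (Tens f g)"
  by (cases "tyof f"; cases "tyof g"; auto simp: typed_iff intro: sVW_eq.tens_smul_left)

lemma tsmulr: "tyof f \<noteq> None \<Longrightarrow> tyof g \<noteq> None \<Longrightarrow> Tens f (Smul x g) \<approx> Smul x (Tens f g)"
  by (cases "tyof f"; cases "tyof g"; auto simp: typed_iff intro: sVW_eq.tens_smul_right)

lemma tyof_ypow[simp]: "tyof (ypow k) = Some (1,1,False)"
  by (induction k) auto

lemma par_ypow[simp]: "par (ypow k) = False"
  by (simp add: par_def)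




lemma zeroadd: "tyof f = Some (a,b,p) \<Longrightarrow> Add (Zero a b p) f \<approx> f"
  by (rule sVW_eq.trans[OF addcomm addzero]) auto

lemma cancel:
  assumes tX: "tyof X = Some (a,b,p)" and tZ: "tyof Z = Some (a,b,p)" and tW: "tyof W = Some (a,b,p)"
    and h: "Add X Z \<approx> Add X W"
  shows "Z \<approx> W"
proof -
  let ?N = "Smul (-1) X"
  have z: "Zero a b p \<approx> Add ?N X"
    by (rule sVW_eq.trans[OF symm[OF addinv[OF tX]] addcomm]) (simp add: tX)
  have "Z \<approx> Add (Zero a b p) Z" by (rule symm[OF zeroadd[OF tZ]])
  also have "\<dots> \<approx> Add (Add ?N X) Z" by (rule cAl[OF z]) (simp add: tZ)
  also have "\<dots> \<approx> Add ?N (Add X Z)" by (rule addassoc) (simp add: tX tZ)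
  also have "\<dots> \<approx> Add ?N (Add X W)" by (rule cAr[OF h]) (simp add: tX tZ)
  also have "\<dots> \<approx> Add (Add ?N X) W" by (rule symm, rule addassoc) (simp add: tX tW)
  also have "\<dots> \<approx> Add (Zero a b p) W" by (rule cAl[OF symm[OF z]]) (simp add: tX tW)
  also have "\<dots> \<approx> W" by (rule zeroadd[OF tW])
  finally show ?thesis .
qed

lemma smul0: assumes tZ: "tyof Z = Some (a,b,p)" shows "Smul 0 Z \<approx> Zero a b p"
proof -
  let ?A = "Smul 0 Z"
  have "Add ?A ?A \<approx> Smul (0+0) Z" by (rule symm, rule smul_addl) (simp add: tZ)
  also have "\<dots> = ?A" by simp
  also have "?A \<approx> Add ?A (Zero a b p)" by (rule symm, rule addzero) (simp add: tZ)
  finally have "Add ?A ?A \<approx> Add ?A (Zero a b p)" .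
  from cancel[OF _ _ _ this] show ?thesis by (simp add: tZ)
qed

lemma negself: assumes tZ: "tyof Z = Some (a,b,p)" and h: "Z \<approx> Smul (-1) Z"
  shows "Z \<approx> Zero a b p"
proof -
  let ?h = "1/2 :: complex"
  have "Z \<approx> Smul 1 Z" by (rule symm, rule smul1) (simp add: tZ)
  also have "Smul 1 Z = Smul (?h + ?h) Z" by simp
  also have "\<dots> \<approx> Add (Smul ?h Z) (Smul ?h Z)" by (rule smul_addl) (simp add: tZ)
  also have "\<dots> \<approx> Add (Smul ?h Z) (Smul ?h (Smul (-1) Z))" by (rule cAr[OF cS[OF h]]) (simp add: tZ)
  also have "\<dots> \<approx> Add (Smul ?h Z) (Smul (?h * (-1)) Z)" by (rule cAr[OF smulsmul]) (simp_all add: tZ)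
  also have "\<dots> \<approx> Smul (?h + ?h * (-1)) Z" by (rule symm, rule smul_addl) (simp add: tZ)
  also have "\<dots> = Smul 0 Z" by simp
  also have "\<dots> \<approx> Zero a b p" by (rule smul0[OF tZ])
  finally show ?thesis .
qed

lemma solve_sum: assumes tA: "tyof A = Some (a,b,p)" and tB: "tyof Bv = Some (a,b,p)"
  and h: "X \<approx> Add A Bv" shows "A \<approx> Add X (Smul (-1) Bv)"
proof -
  have "A \<approx> Add A (Zero a b p)" by (rule symm, rule addzero[OF tA])
  also have "\<dots> \<approx> Add A (Add Bv (Smul (-1) Bv))" by (rule cAr[OF symm[OF addinv[OF tB]]]) (simp add: tA)
  also have "\<dots> \<approx> Add (Add A Bv) (Smul (-1) Bv)" by (rule symm, rule addassoc) (simp add: tA tB)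
  also have "\<dots> \<approx> Add X (Smul (-1) Bv)" by (rule cAl[OF symm[OF h]]) (simp add: tA tB)
  finally show ?thesis .
qed




lemma tid2: "Tens (Id 1) (Id 1) \<approx> Id 2"
  by (metis one_add_one sVW_eq.tens_id)

lemma negswap: assumes tT: "tyof T \<noteq> None" and h: "X \<approx> Smul (-1) T" shows "T \<approx> Smul (-1) X"
proof -
  have "T \<approx> Smul 1 T" by (rule symm, rule smul1[OF tT])
  also have "\<dots> = Smul ((-1)*(-1)) T" by simp
  also have "\<dots> \<approx> Smul (-1) (Smul (-1) T)" by (rule symm, rule smulsmul[OF tT])
  also have "\<dots> \<approx> Smul (-1) X" by (rule cS, rule symm[OF h])
  finally show ?thesis .
qed

lemma unbend:
  assumes tu: "tyof u = Some (0,2,True)"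
  shows "u \<approx> Comp (Tens (Comp (Tens (Id 1) B) (Tens u (Id 1))) (Id 1)) Bs"
proof -
  let ?I = "Id 1"
  have s3: "Comp (Tens (Tens u ?I) ?I) Bs \<approx> Smul (-1) (Comp (Tens (Id 2) Bs) u)"
  proof -
    have "Comp (Tens (Tens u ?I) ?I) Bs \<approx> Comp (Tens u (Tens ?I ?I)) Bs"
      by (rule cCl, rule tassoc) (simp_all add: tu)
    also have "\<dots> \<approx> Comp (Tens u (Id 2)) Bs"
      by (rule cCl, rule cTr[OF tid2]) (simp_all add: tu)
    also have "\<dots> \<approx> Comp (Tens u (Id 2)) (Tens (Id 0) Bs)"
      by (rule cCr, rule symm, rule tul) (simp_all add: tu)
    also have "\<dots> \<approx> Tens (Comp u (Id 0)) (Comp (Id 2) Bs)"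
      by (rule ichp) (simp_all add: tu par_def)
    also have "\<dots> \<approx> Tens u Bs"
      by (rule sVW_eq.tens_cong; rule idr idl) (simp_all add: tu)
    also have "Tens u Bs \<approx> Smul (-1) (Comp (Tens (Id 2) Bs) (Tens u (Id 0)))"
    proof (rule negswap)
      show "tyof (Tens u Bs) \<noteq> None" by (simp add: tu)
      have "Comp (Tens (Id 2) Bs) (Tens u (Id 0)) \<approx> Smul (-1) (Tens (Comp (Id 2) u) (Comp Bs (Id 0)))"
        by (rule ichm) (simp_all add: tu par_def)
      also have "\<dots> \<approx> Smul (-1) (Tens u Bs)"
        by (rule cS, rule sVW_eq.tens_cong; rule idr idl) (simp_all add: tu)
      finally show "Comp (Tens (Id 2) Bs) (Tens u (Id 0)) \<approx> Smul (-1) (Tens u Bs)" .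
    qed
    also have "\<dots> \<approx> Smul (-1) (Comp (Tens (Id 2) Bs) u)"
      by (rule cS, rule cCr, rule tur) (simp_all add: tu)
    finally show ?thesis .
  qed
  have s5: "Comp (Tens (Tens ?I B) ?I) (Tens (Id 2) Bs) \<approx> Smul (-1) (Id 2)"
  proof -
    have "Comp (Tens (Tens ?I B) ?I) (Tens (Id 2) Bs) \<approx> Comp (Tens ?I (Tens B ?I)) (Tens (Id 2) Bs)"
      by (rule cCl, rule tassoc) simp_all
    also have "\<dots> \<approx> Comp (Tens ?I (Tens B ?I)) (Tens (Tens ?I ?I) Bs)"
      by (rule cCr, rule cTl, rule symm[OF tid2]) simp_all
    also have "\<dots> \<approx> Comp (Tens ?I (Tens B ?I)) (Tens ?I (Tens ?I Bs))"
      by (rule cCr, rule tassoc) simp_all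
    also have "\<dots> \<approx> Tens (Comp ?I ?I) (Comp (Tens B ?I) (Tens ?I Bs))"
      by (rule ichp) (simp_all add: par_def)
    also have "\<dots> \<approx> Tens ?I (Smul (-1) ?I)"
      by (rule sVW_eq.tens_cong, rule idl, simp, rule sVW_eq.R2a)
    also have "\<dots> \<approx> Smul (-1) (Tens ?I ?I)"
      by (rule tsmulr) simp_all
    also have "\<dots> \<approx> Smul (-1) (Id 2)"
      by (rule cS, rule tid2)
    finally show ?thesis .
  qed
  let ?tau = "Comp (Tens ?I B) (Tens u ?I)"
  have "Comp (Tens ?tau ?I) Bs \<approx> Comp (Comp (Tens (Tens ?I B) ?I) (Tens (Tens u ?I) ?I)) Bs"
  proof (rule cCl)
    have "Tens ?tau ?I \<approx> Tens ?tau (Comp ?I ?I)"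
      by (rule cTr, rule symm, rule idl) (simp_all add: tu)
    also have "\<dots> \<approx> Comp (Tens (Tens ?I B) ?I) (Tens (Tens u ?I) ?I)"
      by (rule symm, rule ichp) (simp_all add: tu par_def)
    finally show "Tens ?tau ?I \<approx> Comp (Tens (Tens ?I B) ?I) (Tens (Tens u ?I) ?I)" .
  qed (simp add: tu)
  also have "\<dots> \<approx> Comp (Tens (Tens ?I B) ?I) (Comp (Tens (Tens u ?I) ?I) Bs)"
    by (rule assoc) (simp add: tu)
  also have "\<dots> \<approx> Comp (Tens (Tens ?I B) ?I) (Smul (-1) (Comp (Tens (Id 2) Bs) u))"
    by (rule cCr[OF s3]) (simp add: tu)
  also have "\<dots> \<approx> Smul (-1) (Comp (Tens (Tens ?I B) ?I) (Comp (Tens (Id 2) Bs) u))"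
    by (rule csmulr) (simp add: tu)
  also have "\<dots> \<approx> Smul (-1) (Comp (Comp (Tens (Tens ?I B) ?I) (Tens (Id 2) Bs)) u)"
    by (rule cS, rule symm, rule assoc) (simp add: tu)
  also have "\<dots> \<approx> Smul (-1) (Comp (Smul (-1) (Id 2)) u)"
    by (rule cS, rule cCl[OF s5]) (simp add: tu)
  also have "\<dots> \<approx> Smul (-1) (Smul (-1) (Comp (Id 2) u))"
    by (rule cS, rule csmull) (simp add: tu)
  also have "\<dots> \<approx> Smul ((-1)*(-1)) (Comp (Id 2) u)"
    by (rule smulsmul) (simp add: tu)
  also have "\<dots> = Smul 1 (Comp (Id 2) u)" by simp
  also have "\<dots> \<approx> Comp (Id 2) u" by (rule smul1) (simp add: tu)
  also have "\<dots> \<approx> u" by (rule idl) (simp add: tu)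
  finally show ?thesis by (rule symm)
qed




lemma R4b': "Comp B (Tens Y (Id 1)) \<approx> Add (Comp B (Tens (Id 1) Y)) (Smul (-1) B)"
  by (rule solve_sum[OF _ _ sVW_eq.R4b]) simp_all

lemma T1: "Comp (Tens (Id 1) B) (Tens (Comp (Tens (Id 1) Y) Bs) (Id 1)) \<approx> Add Y (Smul (-1) (Id 1))"
proof -
  let ?I = "Id 1"
  let ?X = "Comp B (Tens ?I Y)"
  have a: "Tens (Comp (Tens ?I Y) Bs) ?I \<approx> Comp (Tens (Tens ?I Y) ?I) (Tens Bs ?I)"
  proof -
    have "Tens (Comp (Tens ?I Y) Bs) ?I \<approx> Tens (Comp (Tens ?I Y) Bs) (Comp ?I ?I)"
      by (rule cTr, rule symm, rule idl) simp_all
    also have "\<dots> \<approx> Comp (Tens (Tens ?I Y) ?I) (Tens Bs ?I)"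
      by (rule symm, rule ichp) (simp_all add: par_def)
    finally show ?thesis .
  qed
  have d: "Comp (Tens ?I B) (Tens ?I (Tens Y ?I)) \<approx> Tens ?I (Comp B (Tens Y ?I))"
  proof -
    have "Comp (Tens ?I B) (Tens ?I (Tens Y ?I)) \<approx> Tens (Comp ?I ?I) (Comp B (Tens Y ?I))"
      by (rule ichp) (simp_all add: par_def)
    also have "\<dots> \<approx> Tens ?I (Comp B (Tens Y ?I))"
      by (rule cTl, rule idl) simp_all
    finally show ?thesis .
  qed
  have s1: "Comp (Tens ?I (Tens ?I Y)) (Tens Bs ?I) \<approx> Comp (Tens Bs ?I) Y"
  proof -
    have "Comp (Tens ?I (Tens ?I Y)) (Tens Bs ?I) \<approx> Comp (Tens (Tens ?I ?I) Y) (Tens Bs ?I)"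
      by (rule cCl, rule symm, rule tassoc) simp_all
    also have "\<dots> \<approx> Comp (Tens (Id 2) Y) (Tens Bs ?I)"
      by (rule cCl, rule cTl[OF tid2]) simp_all
    also have "\<dots> \<approx> Tens (Comp (Id 2) Bs) (Comp Y ?I)"
      by (rule ichp) (simp_all add: par_def)
    also have "\<dots> \<approx> Tens Bs Y"
      by (rule sVW_eq.tens_cong; rule idr idl) simp_all
    also have "\<dots> \<approx> Tens (Comp Bs (Id 0)) (Comp ?I Y)"
      by (rule symm, rule sVW_eq.tens_cong; rule idr idl) simp_all
    also have "\<dots> \<approx> Comp (Tens Bs ?I) (Tens (Id 0) Y)"
      by (rule symm, rule ichp) (simp_all add: par_def)
    also have "\<dots> \<approx> Comp (Tens Bs ?I) Y"
      by (rule cCr, rule tul) simp_all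
    finally show ?thesis .
  qed
  have i: "Comp (Tens ?I ?X) (Tens Bs ?I) \<approx> Y"
  proof -
    have "Comp (Tens ?I ?X) (Tens Bs ?I) \<approx> Comp (Comp (Tens ?I B) (Tens ?I (Tens ?I Y))) (Tens Bs ?I)"
    proof (rule cCl)
      have "Tens ?I ?X \<approx> Tens (Comp ?I ?I) ?X" by (rule cTl, rule symm, rule idl) simp_all
      also have "\<dots> \<approx> Comp (Tens ?I B) (Tens ?I (Tens ?I Y))"
        by (rule symm, rule ichp) (simp_all add: par_def)
      finally show "Tens ?I ?X \<approx> Comp (Tens ?I B) (Tens ?I (Tens ?I Y))" .
    qed simp
    also have "\<dots> \<approx> Comp (Tens ?I B) (Comp (Tens ?I (Tens ?I Y)) (Tens Bs ?I))"
      by (rule assoc) simp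
    also have "\<dots> \<approx> Comp (Tens ?I B) (Comp (Tens Bs ?I) Y)"
      by (rule cCr[OF s1]) simp
    also have "\<dots> \<approx> Comp (Comp (Tens ?I B) (Tens Bs ?I)) Y"
      by (rule symm, rule assoc) simp
    also have "\<dots> \<approx> Comp ?I Y"
      by (rule cCl, rule sVW_eq.R2b) simp
    also have "\<dots> \<approx> Y" by (rule idl) simp
    finally show ?thesis .
  qed
  have "Comp (Tens ?I B) (Tens (Comp (Tens ?I Y) Bs) ?I)
        \<approx> Comp (Tens ?I B) (Comp (Tens (Tens ?I Y) ?I) (Tens Bs ?I))"
    by (rule cCr[OF a]) simp
  also have "\<dots> \<approx> Comp (Comp (Tens ?I B) (Tens (Tens ?I Y) ?I)) (Tens Bs ?I)"
    by (rule symm, rule assoc) simp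
  also have "\<dots> \<approx> Comp (Comp (Tens ?I B) (Tens ?I (Tens Y ?I))) (Tens Bs ?I)"
    by (rule cCl, rule cCr, rule tassoc) simp_all
  also have "\<dots> \<approx> Comp (Tens ?I (Comp B (Tens Y ?I))) (Tens Bs ?I)"
    by (rule cCl[OF d]) simp
  also have "\<dots> \<approx> Comp (Tens ?I (Add ?X (Smul (-1) B))) (Tens Bs ?I)"
    by (rule cCl, rule cTr[OF R4b']) simp_all
  also have "\<dots> \<approx> Comp (Add (Tens ?I ?X) (Tens ?I (Smul (-1) B))) (Tens Bs ?I)"
    by (rule cCl, rule taddr) simp_all
  also have "\<dots> \<approx> Comp (Add (Tens ?I ?X) (Smul (-1) (Tens ?I B))) (Tens Bs ?I)"
    by (rule cCl, rule cAr, rule tsmulr) simp_all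
  also have "\<dots> \<approx> Add (Comp (Tens ?I ?X) (Tens Bs ?I)) (Comp (Smul (-1) (Tens ?I B)) (Tens Bs ?I))"
    by (rule caddl) simp
  also have "\<dots> \<approx> Add Y (Comp (Smul (-1) (Tens ?I B)) (Tens Bs ?I))"
    by (rule cAl[OF i]) simp
  also have "\<dots> \<approx> Add Y (Smul (-1) (Comp (Tens ?I B) (Tens Bs ?I)))"
    by (rule cAr, rule csmull) simp_all
  also have "\<dots> \<approx> Add Y (Smul (-1) ?I)"
    by (rule cAr, rule cS, rule sVW_eq.R2b) simp
  finally show ?thesis .
qed

lemma cupslide: "Comp (Tens (Id 1) Y) Bs \<approx> Add (Comp (Tens Y (Id 1)) Bs) (Smul (-1) Bs)"
proof -
  let ?I = "Id 1"
  have "Comp (Tens ?I Y) Bs \<approx> Comp (Tens (Comp (Tens ?I B) (Tens (Comp (Tens ?I Y) Bs) ?I)) ?I) Bs"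
    by (rule unbend) simp
  also have "\<dots> \<approx> Comp (Tens (Add Y (Smul (-1) ?I)) ?I) Bs"
    by (rule cCl, rule cTl[OF T1]) simp_all
  also have "\<dots> \<approx> Comp (Add (Tens Y ?I) (Tens (Smul (-1) ?I) ?I)) Bs"
    by (rule cCl, rule taddl) simp_all
  also have "\<dots> \<approx> Add (Comp (Tens Y ?I) Bs) (Comp (Tens (Smul (-1) ?I) ?I) Bs)"
    by (rule caddl) simp
  also have "\<dots> \<approx> Add (Comp (Tens Y ?I) Bs) (Comp (Smul (-1) (Tens ?I ?I)) Bs)"
    by (rule cAr, rule cCl, rule tsmull) simp_all
  also have "\<dots> \<approx> Add (Comp (Tens Y ?I) Bs) (Smul (-1) (Comp (Tens ?I ?I) Bs))"
    by (rule cAr, rule csmull) simp_all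
  also have "\<dots> \<approx> Add (Comp (Tens Y ?I) Bs) (Smul (-1) (Comp (Id 2) Bs))"
    by (rule cAr, rule cS, rule cCl[OF tid2]) simp_all
  also have "\<dots> \<approx> Add (Comp (Tens Y ?I) Bs) (Smul (-1) Bs)"
    by (rule cAr, rule cS, rule idl) simp_all
  finally show ?thesis .
qed




lemma ycomm: "Comp (ypow m) Y \<approx> Comp Y (ypow m)"
proof (induction m)
  case 0
  have "Comp (Id 1) Y \<approx> Y" by (rule idl) simp
  also have "Y \<approx> Comp Y (Id 1)" by (rule symm, rule idr) simp
  finally show ?case by simp
next
  case (Suc m)
  have "Comp (Comp Y (ypow m)) Y \<approx> Comp Y (Comp (ypow m) Y)" by (rule assoc) simp
  also have "\<dots> \<approx> Comp Y (Comp Y (ypow m))" by (rule cCr[OF Suc.IH]) simp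
  finally show ?case by simp
qed

lemma C1: "Comp B (Comp (Tens (ypow k) (ypow (Suc l))) Bs) \<approx>
   Add (Comp B (Comp (Tens (ypow (Suc k)) (ypow l)) Bs)) (Comp B (Comp (Tens (ypow k) (ypow l)) Bs))"
proof -
  let ?I = "Id 1"
  let ?T = "Tens (ypow k) (ypow l)"
  let ?P = "Comp ?T Bs"
  have 1: "Tens (ypow k) (Comp Y (ypow l)) \<approx> Comp (Tens ?I Y) ?T"
  proof -
    have "Tens (ypow k) (Comp Y (ypow l)) \<approx> Tens (Comp ?I (ypow k)) (Comp Y (ypow l))"
      by (rule cTl, rule symm, rule idl) simp_all
    also have "\<dots> \<approx> Comp (Tens ?I Y) ?T" by (rule symm, rule ichp) (simp_all add: par_def)
    finally show ?thesis .
  qed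
  have 3: "Comp (Tens Y ?I) ?T \<approx> Tens (ypow (Suc k)) (ypow l)"
  proof -
    have "Comp (Tens Y ?I) ?T \<approx> Tens (Comp Y (ypow k)) (Comp ?I (ypow l))"
      by (rule ichp) (simp_all add: par_def)
    also have "\<dots> \<approx> Tens (Comp Y (ypow k)) (ypow l)" by (rule cTr, rule idl) simp_all
    finally show ?thesis by simp
  qed
  have "Comp B (Comp (Tens (ypow k) (ypow (Suc l))) Bs) = Comp B (Comp (Tens (ypow k) (Comp Y (ypow l))) Bs)"
    by simp
  also have "\<dots> \<approx> Comp B (Comp (Comp (Tens ?I Y) ?T) Bs)"
    by (rule cCr, rule cCl[OF 1]) simp_all
  also have "\<dots> \<approx> Comp B (Comp (Tens ?I Y) ?P)"
    by (rule cCr, rule assoc) simp_all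
  also have "\<dots> \<approx> Comp (Comp B (Tens ?I Y)) ?P"
    by (rule symm, rule assoc) simp
  also have "\<dots> \<approx> Comp (Add (Comp B (Tens Y ?I)) B) ?P"
    by (rule cCl, rule sVW_eq.R4b) simp
  also have "\<dots> \<approx> Add (Comp (Comp B (Tens Y ?I)) ?P) (Comp B ?P)"
    by (rule caddl) simp
  also have "\<dots> \<approx> Add (Comp B (Comp (Tens Y ?I) ?P)) (Comp B ?P)"
    by (rule cAl, rule assoc) simp_all
  also have "\<dots> \<approx> Add (Comp B (Comp (Comp (Tens Y ?I) ?T) Bs)) (Comp B ?P)"
    by (rule cAl, rule cCr, rule symm, rule assoc) simp_all
  also have "\<dots> \<approx> Add (Comp B (Comp (Tens (ypow (Suc k)) (ypow l)) Bs)) (Comp B ?P)"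
    by (rule cAl, rule cCr, rule cCl[OF 3]) simp_all
  finally show ?thesis .
qed

lemma C2: "Comp B (Comp (Tens (ypow k) (ypow 1)) Bs) \<approx>
   Add (Comp B (Comp (Tens (ypow (Suc k)) (Id 1)) Bs)) (Smul (-1) (Comp B (Comp (Tens (ypow k) (Id 1)) Bs)))"
proof -
  let ?I = "Id 1"
  let ?K = "Tens (ypow k) ?I"
  have 1: "Tens (ypow k) (Comp Y ?I) \<approx> Comp ?K (Tens ?I Y)"
  proof -
    have "Tens (ypow k) (Comp Y ?I) \<approx> Tens (Comp (ypow k) ?I) (Comp ?I Y)"
    proof (rule sVW_eq.tens_cong)
      show "ypow k \<approx> Comp (ypow k) ?I" by (rule symm, rule idr) simp
      have "Comp Y ?I \<approx> Y" by (rule idr) simp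
      also have "Y \<approx> Comp ?I Y" by (rule symm, rule idl) simp
      finally show "Comp Y ?I \<approx> Comp ?I Y" .
    qed
    also have "\<dots> \<approx> Comp ?K (Tens ?I Y)" by (rule symm, rule ichp) (simp_all add: par_def)
    finally show ?thesis .
  qed
  have 4: "Comp ?K (Comp (Tens Y ?I) Bs) \<approx> Comp (Tens (ypow (Suc k)) ?I) Bs"
  proof -
    have "Comp ?K (Comp (Tens Y ?I) Bs) \<approx> Comp (Comp ?K (Tens Y ?I)) Bs"
      by (rule symm, rule assoc) simp
    also have "\<dots> \<approx> Comp (Tens (Comp (ypow k) Y) (Comp ?I ?I)) Bs"
      by (rule cCl, rule ichp) (simp_all add: par_def)
    also have "\<dots> \<approx> Comp (Tens (Comp Y (ypow k)) ?I) Bs"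
      by (rule cCl, rule sVW_eq.tens_cong, rule ycomm, rule idl) simp_all
    finally show ?thesis by simp
  qed
  have "Comp B (Comp (Tens (ypow k) (ypow 1)) Bs) = Comp B (Comp (Tens (ypow k) (Comp Y ?I)) Bs)"
    by simp
  also have "\<dots> \<approx> Comp B (Comp (Comp ?K (Tens ?I Y)) Bs)"
    by (rule cCr, rule cCl[OF 1]) simp_all
  also have "\<dots> \<approx> Comp B (Comp ?K (Comp (Tens ?I Y) Bs))"
    by (rule cCr, rule assoc) simp_all
  also have "\<dots> \<approx> Comp B (Comp ?K (Add (Comp (Tens Y ?I) Bs) (Smul (-1) Bs)))"
    by (rule cCr, rule cCr[OF cupslide]) simp_all
  also have "\<dots> \<approx> Comp B (Add (Comp ?K (Comp (Tens Y ?I) Bs)) (Comp ?K (Smul (-1) Bs)))"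
    by (rule cCr, rule caddr) simp_all
  also have "\<dots> \<approx> Add (Comp B (Comp ?K (Comp (Tens Y ?I) Bs))) (Comp B (Comp ?K (Smul (-1) Bs)))"
    by (rule caddr) simp
  also have "\<dots> \<approx> Add (Comp B (Comp (Tens (ypow (Suc k)) ?I) Bs)) (Comp B (Comp ?K (Smul (-1) Bs)))"
    by (rule cAl, rule cCr[OF 4]) simp_all
  also have "\<dots> \<approx> Add (Comp B (Comp (Tens (ypow (Suc k)) ?I) Bs)) (Comp B (Smul (-1) (Comp ?K Bs)))"
    by (rule cAr, rule cCr, rule csmulr) simp_all
  also have "\<dots> \<approx> Add (Comp B (Comp (Tens (ypow (Suc k)) ?I) Bs)) (Smul (-1) (Comp B (Comp ?K Bs)))"
    by (rule cAr, rule csmulr) simp_all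
  finally show ?thesis .
qed

lemma dzero: "Comp B (Comp (Tens (ypow k) (Id 1)) Bs) \<approx> Zero 0 0 False"
proof -
  let ?D = "\<lambda>k. Comp B (Comp (Tens (ypow k) (Id 1)) Bs)"
  have "Add (?D (Suc k)) (?D k) \<approx> Comp B (Comp (Tens (ypow k) (ypow 1)) Bs)"
    using symm[OF C1[of k 0]] by (simp only: One_nat_def ypow.simps(1))
  also have "\<dots> \<approx> Add (?D (Suc k)) (Smul (-1) (?D k))" by (rule C2)
  finally have "Add (?D (Suc k)) (?D k) \<approx> Add (?D (Suc k)) (Smul (-1) (?D k))" .
  from cancel[where a=0 and b=0 and p=False, OF _ _ _ this] have "?D k \<approx> Smul (-1) (?D k)" by simp
  from negself[where a=0 and b=0 and p=False, OF _ this] show ?thesis by simp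
qed

theorem mainTheorem5:
  fixes k l :: nat
  shows "sVW_eq (Comp B (Comp (Tens (ypow k) (ypow l)) Bs)) (Zero 0 0 False)"
proof (induction l arbitrary: k)
  case 0
  show ?case using dzero[of k] by simp
next
  case (Suc l)
  have "Comp B (Comp (Tens (ypow k) (ypow (Suc l))) Bs) \<approx>
   Add (Comp B (Comp (Tens (ypow (Suc k)) (ypow l)) Bs)) (Comp B (Comp (Tens (ypow k) (ypow l)) Bs))"
    by (rule C1)
  also have "\<dots> \<approx> Add (Zero 0 0 False) (Zero 0 0 False)"
    by (rule cA[OF Suc.IH Suc.IH]) simp
  also have "\<dots> \<approx> Zero 0 0 False" by (rule addzero) simp
  finally show ?case .
qed


end
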